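(* Let $n\ge2$, let $\overline{G}_n=\overline{H}_0\overline{H}_1\cdots\overline{H}_{n-1}$ be a polyphenyl hexagonal chain with $n$ hexagons, and let $\overline{G}_{n-1}=\overline{H}_0\cdots\overline{H}_{n-2}$. Then $$W(\overline{G}_n)=W(\overline{G}_{n-1})+6\,W(\overline{G}_{n-1},t_{n-1})+90n-63,$$ and for every vertex $t_n$ of $\overline{H}_{n-1}$ other than $c_{n-1}$, $$W(\overline{G}_n,t_n)=W(\overline{G}_{n-1},t_{n-1})+g(t_n),$$ where $g(t_n)=12(n-1)+9$ if $t_n$ is an ortho-vertex $o_{n-1}$, $g(t_n)=18(n-1)+9$ if $t_n$ is a meta-vertex $m_{n-1}$, and $g(t_n)=24(n-1)+9$ if $t_n$ is the para-vertex $p_{n-1}$ of $\overline{H}_{n-1}$. Moreover $W(\overline{G}_1)=W(\overline{H}_0)=27$ and $W(\overline{G}_1,t_1)=g(t_1)=9$ for any vertex $t_1$ of $\overline{H}_0$.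
   Context: All graphs are simple and connected; $d(u,v)$ is the shortest-path distance; $W(G,v)=\sum_{u\in V(G)}d_G(u,v)$ and the Wiener index is $W(G)=\sum_{\{u,v\}\subseteq V(G)}d_G(u,v)$. A polyphenyl hexagonal chain $\overline{G}_n=\overline{H}_0\overline{H}_1\cdots\overline{H}_{n-1}$ of length $n$ consists of pairwise vertex-disjoint hexagons (6-cycles) $\overline{H}_0,\dots,\overline{H}_{n-1}$ together with cut-edges: $\overline{G}_1=\overline{H}_0$, and for $k\ge1$, $\overline{G}_{k+1}$ is obtained from $\overline{G}_k$ by adding the hexagon $\overline{H}_k$ and a cut-edge joining a vertex $c_k$ of $\overline{H}_k$ to a vertex $t_k$ of $\overline{H}_{k-1}$ (the tail), where for $k\ge2$, $t_k\ne c_{k-1}$ (i.e. $t_k$ is a non-cut-vertex of the terminal hexagon $\overline{H}_{k-1}$). For $k\ge1$, a vertex of $\overline{H}_k$ at distance $1$, $2$, $3$ from $c_k$ is an ortho-, meta-, para-vertex of $\overline{H}_k$, denoted $o_k,m_k,p_k$. *)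

theory Defs
  imports Main
begin

inductive walk :: "'a set \<Rightarrow> ('a \<Rightarrow> 'a \<Rightarrow> bool) \<Rightarrow> 'a \<Rightarrow> 'a \<Rightarrow> nat \<Rightarrow> bool"
  for V E where
  walk_refl: "u \<in> V \<Longrightarrow> walk V E u u 0"
| walk_step: "u \<in> V \<Longrightarrow> E u w \<Longrightarrow> walk V E w v k \<Longrightarrow> walk V E u v (Suc k)"

definition gdist :: "'a set \<Rightarrow> ('a \<Rightarrow> 'a \<Rightarrow> bool) \<Rightarrow> 'a \<Rightarrow> 'a \<Rightarrow> nat" where
  "gdist V E u v = (LEAST k. walk V E u v k)"

definition transmission :: "'a set \<Rightarrow> ('a \<Rightarrow> 'a \<Rightarrow> bool) \<Rightarrow> 'a \<Rightarrow> nat" where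
  "transmission V E v = (\<Sum>u\<in>V. gdist V E u v)"

text \<open>Wiener index: sum over unordered pairs {u,v}, i.e. half the sum over ordered pairs
  (the diagonal contributes 0).\<close>
definition wiener :: "'a set \<Rightarrow> ('a \<Rightarrow> 'a \<Rightarrow> bool) \<Rightarrow> nat" where
  "wiener V E = (\<Sum>u\<in>V. \<Sum>v\<in>V. gdist V E u v) div 2"

text \<open>Hexagon H_k has vertices (k,0),...,(k,5) with (k,i) adjacent to (k,(i+1) mod 6).
  For k \<ge> 1 the cut-edge joins c k (a vertex of H_k) with t k (a vertex of H_(k-1)).\<close>
definition phc_V :: "nat \<Rightarrow> (nat \<times> nat) set" where
  "phc_V n = {(k, i). k < n \<and> i < 6}"

definition phc_E :: "(nat \<Rightarrow> nat) \<Rightarrow> (nat \<Rightarrow> nat) \<Rightarrow> nat \<times> nat \<Rightarrow> nat \<times> nat \<Rightarrow> bool" where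
  "phc_E c t x y =
     (case x of (k, i) \<Rightarrow> case y of (k', i') \<Rightarrow>
        (k = k' \<and> (i' = (i + 1) mod 6 \<or> i = (i' + 1) mod 6))
      \<or> (k' = k + 1 \<and> i = t k' \<and> i' = c k')
      \<or> (k = k' + 1 \<and> i' = t k \<and> i = c k))"

definition phc_valid :: "nat \<Rightarrow> (nat \<Rightarrow> nat) \<Rightarrow> (nat \<Rightarrow> nat) \<Rightarrow> bool" where
  "phc_valid n c t =
     ((\<forall>k. 1 \<le> k \<and> k < n \<longrightarrow> c k < 6 \<and> t k < 6)
      \<and> (\<forall>k. 2 \<le> k \<and> k < n \<longrightarrow> t k \<noteq> c (k - 1)))"

end

theory Submission
  imports Defs
begin

definition hd :: "nat \<Rightarrow> nat \<Rightarrow> nat" where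
  "hd i j = min ((j + 6 - i) mod 6) ((i + 6 - j) mod 6)"

lemma lt6: "(i::nat) < 6 \<longleftrightarrow> i = 0 \<or> i = 1 \<or> i = 2 \<or> i = 3 \<or> i = 4 \<or> i = 5" by auto

lemma hd_tri: "i < 6 \<Longrightarrow> j < 6 \<Longrightarrow> k < 6 \<Longrightarrow> hd i j \<le> hd i k + hd k j"
  unfolding lt6 by (elim disjE; simp add: hd_def)

lemma hd_nb: "i < 6 \<Longrightarrow> i' < 6 \<Longrightarrow> i' = (i + 1) mod 6 \<or> i = (i' + 1) mod 6 \<Longrightarrow> hd i i' \<le> 1"
  unfolding lt6 by (elim disjE; simp add: hd_def)

lemma hd_0[simp]: "hd i i = 0" by (simp add: hd_def)

lemma sum6: "(\<Sum>j<(6::nat). f j) = f 0 + f 1 + f 2 + f 3 + f 4 + (f 5::nat)"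
  by (simp add: eval_nat_numeral)
lemma hd_sum1: "x < 6 \<Longrightarrow> (\<Sum>j<6. hd x j) = 9"
  unfolding sum6 lt6 by (elim disjE; simp add: hd_def)
lemma hd_sum2: "x < 6 \<Longrightarrow> (\<Sum>j<6. hd j x) = 9"
  unfolding sum6 lt6 by (elim disjE; simp add: hd_def)
lemma hd_sum3: "(\<Sum>i<6. \<Sum>j<6. hd i j) = 54"
  unfolding sum6 by (simp add: hd_def)

lemma hd_cases: "x < 6 \<Longrightarrow> y < 6 \<Longrightarrow> x \<noteq> y \<Longrightarrow> hd x y = 1 \<or> hd x y = 2 \<or> hd x y = 3"
  unfolding lt6 by (elim disjE; simp add: hd_def)
lemma hd_fwd: "(i::nat) < 6 \<Longrightarrow> j < 6 \<Longrightarrow> (i + (j + 6 - i) mod 6) mod 6 = j"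
  unfolding lt6 by (elim disjE; simp)


lemma walk_in: "walk V E u v k \<Longrightarrow> u \<in> V \<and> v \<in> V"
  by (induction rule: walk.induct) auto

lemma walk_snoc: "walk V E u v k \<Longrightarrow> E v w \<Longrightarrow> w \<in> V \<Longrightarrow> walk V E u w (Suc k)"
  by (induction rule: walk.induct) (auto intro: walk.intros)

lemma walk_rev: "walk V E u v k \<Longrightarrow> (\<And>x y. E x y \<Longrightarrow> E y x) \<Longrightarrow> walk V E v u k"
proof (induction rule: walk.induct)
  case (walk_refl u) then show ?case by (auto intro: walk.intros)
next
  case (walk_step u w v k) then show ?case by (auto intro: walk_snoc)
qed

lemma walk_app: "walk V E u w k1 \<Longrightarrow> walk V E w v k2 \<Longrightarrow> walk V E u v (k1 + k2)"
  by (induction rule: walk.induct) (auto intro: walk.intros)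

lemma E_sym: "phc_E c t x y \<Longrightarrow> phc_E c t y x"
  unfolding phc_E_def by (auto split: prod.splits)

lemma V_eq: "phc_V m = {..<m} \<times> {..<6}"
  unfolding phc_V_def by auto

definition vm :: "nat \<Rightarrow> (nat \<Rightarrow> nat) \<Rightarrow> (nat \<Rightarrow> nat) \<Rightarrow> bool" where
  "vm m c t = (\<forall>k. 1 \<le> k \<and> k < m \<longrightarrow> c k < 6 \<and> t k < 6)"

lemma walk_fwd: "a < m \<Longrightarrow> i < 6 \<Longrightarrow> walk (phc_V m) (phc_E c t) (a, i) (a, (i + k) mod 6) k"
proof (induction k arbitrary: i)
  case 0 then show ?case by (auto intro: walk.intros simp: phc_V_def)
next
  case (Suc k)
  have "walk (phc_V m) (phc_E c t) (a, (i+1) mod 6) (a, ((i+1) mod 6 + k) mod 6) k"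
    using Suc by auto
  moreover have "((i+1) mod 6 + k) mod 6 = (i + Suc k) mod 6" by (simp add: mod_add_left_eq)
  moreover have "phc_E c t (a,i) (a, (i+1) mod 6)" by (simp add: phc_E_def)
  ultimately show ?case using Suc.prems by (auto intro: walk.intros simp: phc_V_def)
qed

lemma walk_hex: "a < m \<Longrightarrow> i < 6 \<Longrightarrow> j < 6 \<Longrightarrow> walk (phc_V m) (phc_E c t) (a, i) (a, j) (hd i j)"
proof -
  assume a: "a < m" "i < 6" "j < 6"
  have w1: "walk (phc_V m) (phc_E c t) (a, i) (a, j) ((j + 6 - i) mod 6)"
    using walk_fwd[OF a(1) a(2), of c t "(j + 6 - i) mod 6"] hd_fwd[OF a(2) a(3)] by simp
  have "walk (phc_V m) (phc_E c t) (a, j) (a, i) ((i + 6 - j) mod 6)"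
    using walk_fwd[OF a(1) a(3), of c t "(i + 6 - j) mod 6"] hd_fwd[OF a(3) a(2)] by simp
  then have w2: "walk (phc_V m) (phc_E c t) (a, i) (a, j) ((i + 6 - j) mod 6)"
    using walk_rev E_sym by metis
  show ?thesis unfolding hd_def min_def using w1 w2 by auto
qed

function D :: "(nat \<Rightarrow> nat) \<Rightarrow> (nat \<Rightarrow> nat) \<Rightarrow> nat \<times> nat \<Rightarrow> nat \<times> nat \<Rightarrow> nat" where
  "D c t (a, i) (b, j) = (if a = b then hd i j
     else if a < b then hd i (t (Suc a)) + 1 + D c t (Suc a, c (Suc a)) (b, j)
     else hd i (c a) + 1 + D c t (a - 1, t a) (b, j))"
  by pat_completeness auto
termination
  by (relation "measure (\<lambda>(c, t, (a, i), (b, j)). if a < b then b - a else a - b)") auto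

declare D.simps[simp del]

lemma D_eq[simp]: "D c t (a, i) (a, j) = hd i j" by (simp add: D.simps)
lemma D_lt: "a < b \<Longrightarrow> D c t (a, i) (b, j) = hd i (t (Suc a)) + 1 + D c t (Suc a, c (Suc a)) (b, j)"
  by (simp add: D.simps)
lemma D_gt: "b < a \<Longrightarrow> D c t (a, i) (b, j) = hd i (c a) + 1 + D c t (a - 1, t a) (b, j)"
  by (simp add: D.simps)

lemma walk_D: "vm m c t \<Longrightarrow> u \<in> phc_V m \<Longrightarrow> v \<in> phc_V m \<Longrightarrow> walk (phc_V m) (phc_E c t) u v (D c t u v)"
proof (induction c t u v rule: D.induct)
  case (1 c t a i b j)
  show ?case
  proof (cases "a = b")
    case True then show ?thesis using 1 walk_hex by (auto simp: phc_V_def)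
  next
    case False
    show ?thesis
    proof (cases "a < b")
      case True
      have v: "c (Suc a) < 6" "t (Suc a) < 6" using 1(3-5) True unfolding vm_def phc_V_def by auto
      have w1: "walk (phc_V m) (phc_E c t) (a, i) (a, t (Suc a)) (hd i (t (Suc a)))"
        using 1(4,5) True v walk_hex by (auto simp: phc_V_def)
      have w2: "walk (phc_V m) (phc_E c t) (Suc a, c (Suc a)) (b, j) (D c t (Suc a, c (Suc a)) (b, j))"
        using 1 False True v by (auto simp: phc_V_def)
      have "walk (phc_V m) (phc_E c t) (a, t (Suc a)) (b, j) (Suc (D c t (Suc a, c (Suc a)) (b, j)))"
        using w2 1(4,5) True v by (intro walk_step) (auto simp: phc_V_def phc_E_def)
      from walk_app[OF w1 this] show ?thesis using True by (simp add: D_lt)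
    next
      case gt: False
      then have ba: "b < a" using False by simp
      have v: "c a < 6" "t a < 6" using 1(3-5) ba unfolding vm_def phc_V_def by auto
      have w1: "walk (phc_V m) (phc_E c t) (a, i) (a, c a) (hd i (c a))"
        using 1(4,5) v walk_hex by (auto simp: phc_V_def)
      have w2: "walk (phc_V m) (phc_E c t) (a - 1, t a) (b, j) (D c t (a - 1, t a) (b, j))"
        using 1 False gt v by (auto simp: phc_V_def)
      have "walk (phc_V m) (phc_E c t) (a, c a) (b, j) (Suc (D c t (a - 1, t a) (b, j)))"
        using w2 1(4,5) ba v by (intro walk_step) (auto simp: phc_V_def phc_E_def)
      from walk_app[OF w1 this] show ?thesis using ba by (simp add: D_gt)
    qed
  qed
qed


lemma D_lip:
  assumes vm: "vm m c t" and x: "x \<in> phc_V m" and y: "y \<in> phc_V m" and v: "v \<in> phc_V m"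
    and e: "phc_E c t x y"
  shows "D c t x v \<le> D c t y v + 1"
proof -
  obtain a i where xa: "x = (a, i)" by fastforce
  obtain a' i' where ya: "y = (a', i')" by fastforce
  obtain b j where vb: "v = (b, j)" by fastforce
  have ai: "a < m" "i < 6" "a' < m" "i' < 6" "b < m" "j < 6" using x y v xa ya vb by (auto simp: phc_V_def)
  have e': "(a = a' \<and> (i' = (i + 1) mod 6 \<or> i = (i' + 1) mod 6))
      \<or> (a' = a + 1 \<and> i = t a' \<and> i' = c a')
      \<or> (a = a' + 1 \<and> i' = t a \<and> i = c a)" using e xa ya by (simp add: phc_E_def)
  then consider "a = a'" "i' = (i + 1) mod 6 \<or> i = (i' + 1) mod 6"
    | "a' = a + 1" "i = t a'" "i' = c a'" | "a = a' + 1" "i' = t a" "i = c a" by blast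
  then show ?thesis
  proof cases
    case 1
    have nb: "hd i i' \<le> 1" using hd_nb[OF ai(2) ai(4) 1(2)] .
    show ?thesis
    proof (cases "a = b")
      case True
      then show ?thesis using hd_tri[OF ai(2) ai(6) ai(4)] nb xa ya vb 1 by simp
    next
      case False
      show ?thesis
      proof (cases "a < b")
        case True
        have h: "t (Suc a) < 6" using vm True ai unfolding vm_def by auto
        show ?thesis using hd_tri[OF ai(2) h ai(4)] nb xa ya vb 1 True by (simp add: D_lt)
      next
        case gt: False
        have h: "c a < 6" using vm gt False ai unfolding vm_def by auto
        show ?thesis using hd_tri[OF ai(2) h ai(4)] nb xa ya vb 1 gt False by (simp add: D_gt)
      qed
    qed
  next
    case 2
    show ?thesis
    proof (cases "a < b")
      case True then show ?thesis using xa ya vb 2 by (simp add: D_lt)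
    next
      case False
      then have "b < a'" using 2 by simp
      then show ?thesis using xa ya vb 2 by (simp add: D_gt)
    qed
  next
    case 3
    show ?thesis
    proof (cases "a' < b")
      case True then show ?thesis using xa ya vb 3 by (simp add: D_lt)
    next
      case False
      then have "b < a" using 3 by simp
      then show ?thesis using xa ya vb 3 by (simp add: D_gt)
    qed
  qed
qed

lemma walk_lower: "walk V E u v k \<Longrightarrow> V = phc_V m \<Longrightarrow> E = phc_E c t \<Longrightarrow> vm m c t \<Longrightarrow> D c t u v \<le> k"
proof (induction rule: walk.induct)
  case (walk_refl u) then show ?case by (cases u) simp
next
  case (walk_step u w v k)
  have "D c t u v \<le> D c t w v + 1"
    using walk_step walk_in[OF walk_step(3)] by (intro D_lip[of m]) auto
  then show ?case using walk_step by simp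
qed

lemma gdist_D: "vm m c t \<Longrightarrow> u \<in> phc_V m \<Longrightarrow> v \<in> phc_V m \<Longrightarrow> gdist (phc_V m) (phc_E c t) u v = D c t u v"
  unfolding gdist_def by (rule Least_equality) (auto intro: walk_D walk_lower)

lemma gdist_sym: "gdist (phc_V m) (phc_E c t) u v = gdist (phc_V m) (phc_E c t) v u"
proof -
  have "(\<lambda>k. walk (phc_V m) (phc_E c t) u v k) = (\<lambda>k. walk (phc_V m) (phc_E c t) v u k)"
    by (intro ext iffI; erule walk_rev; rule E_sym; assumption)
  then show ?thesis unfolding gdist_def by simp
qed

lemma D_sym: "vm m c t \<Longrightarrow> u \<in> phc_V m \<Longrightarrow> v \<in> phc_V m \<Longrightarrow> D c t u v = D c t v u"
  using gdist_D[of m c t u v] gdist_D[of m c t v u] gdist_sym[of m c t u v] by simp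


lemma hd_sym: "hd i j = hd j i" unfolding hd_def by (simp add: min.commute)

lemma sumV_Suc: "sum f (phc_V (Suc m)) = sum f (phc_V m) + (\<Sum>j<6. f (m, j))"
proof -
  have g: "\<And>m. sum f (phc_V m) = (\<Sum>k<m. \<Sum>j<6. f (k, j))"
    unfolding V_eq by (simp add: sum.cartesian_product)
  show ?thesis unfolding g by simp
qed

lemma sumV1: "sum f (phc_V (Suc 0)) = (\<Sum>j<6. f (0, j))"
  using sumV_Suc[of f 0] by (simp add: phc_V_def)

lemma card_V: "card (phc_V m) = m * 6"
  unfolding V_eq by (simp add: card_cartesian_product)

lemma vm_mono: "vm n c t \<Longrightarrow> m \<le> n \<Longrightarrow> vm m c t" unfolding vm_def by auto

theorem theorem3p1:
  fixes n :: nat and c t :: "nat \<Rightarrow> nat"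
  assumes "n \<ge> 2" and "phc_valid n c t"
  shows "(wiener (phc_V n) (phc_E c t)
           = wiener (phc_V (n - 1)) (phc_E c t)
             + 6 * transmission (phc_V (n - 1)) (phc_E c t) (n - 2, t (n - 1))
             + 90 * n - 63)
       \<and> (\<forall>x. x < 6 \<and> x \<noteq> c (n - 1) \<longrightarrow>
           transmission (phc_V n) (phc_E c t) (n - 1, x)
           = transmission (phc_V (n - 1)) (phc_E c t) (n - 2, t (n - 1))
             + (if gdist (phc_V n) (phc_E c t) (n - 1, x) (n - 1, c (n - 1)) = 1
                  then 12 * (n - 1) + 9
                else if gdist (phc_V n) (phc_E c t) (n - 1, x) (n - 1, c (n - 1)) = 2
                  then 18 * (n - 1) + 9
                else 24 * (n - 1) + 9))
       \<and> wiener (phc_V 1) (phc_E c t) = 27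
       \<and> (\<forall>x. x < 6 \<longrightarrow> transmission (phc_V 1) (phc_E c t) (0, x) = 9)"
proof -
  obtain m where nm: "n = Suc m" and m1: "1 \<le> m" using assms(1) by (cases n) auto
  let ?E = "phc_E c t"
  let ?tl = "(m - 1, t m)"
  have vn: "vm n c t" using assms(2) unfolding phc_valid_def vm_def by auto
  have vmm: "vm m c t" "vm 1 c t" using vm_mono[OF vn] nm m1 by auto
  have cm: "c m < 6" "t m < 6" using vn nm m1 unfolding vm_def by auto
  have tlV: "?tl \<in> phc_V m" using cm m1 by (simp add: phc_V_def)
  have sub: "\<And>u. u \<in> phc_V m \<Longrightarrow> u \<in> phc_V n" using nm by (auto simp: phc_V_def)
  have HV: "\<And>j. j < 6 \<Longrightarrow> (m, j) \<in> phc_V n" using nm by (simp add: phc_V_def)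
  have gn: "\<And>u v. u \<in> phc_V n \<Longrightarrow> v \<in> phc_V n \<Longrightarrow> gdist (phc_V n) ?E u v = D c t u v"
    using gdist_D[OF vn] .
  have gm: "\<And>u v. u \<in> phc_V m \<Longrightarrow> v \<in> phc_V m \<Longrightarrow> gdist (phc_V m) ?E u v = D c t u v"
    using gdist_D[OF vmm(1)] .
  have g1: "\<And>i j. i < 6 \<Longrightarrow> j < 6 \<Longrightarrow> gdist (phc_V 1) ?E (0, i) (0, j) = hd i j"
    using gdist_D[OF vmm(2)] by (simp add: phc_V_def)
  have KB: "\<And>v i. v \<in> phc_V m \<Longrightarrow> D c t (m, i) v = hd i (c m) + 1 + D c t ?tl v"
  proof -
    fix v i assume v: "v \<in> phc_V m"
    obtain b j where vb: "v = (b, j)" by fastforce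
    have "b < m" using v vb by (simp add: phc_V_def)
    then show "D c t (m, i) v = hd i (c m) + 1 + D c t ?tl v" using vb by (simp add: D_gt)
  qed
  have KA: "\<And>u j. u \<in> phc_V m \<Longrightarrow> j < 6 \<Longrightarrow> D c t u (m, j) = D c t u ?tl + 1 + hd (c m) j"
  proof -
    fix u and j :: nat assume u: "u \<in> phc_V m" and j: "j < 6"
    have "D c t u (m, j) = D c t (m, j) u" using D_sym[OF vn sub[OF u] HV[OF j]] .
    also have "\<dots> = hd j (c m) + 1 + D c t ?tl u" using KB[OF u] .
    also have "D c t ?tl u = D c t u ?tl" using D_sym[OF vmm(1) tlV u] .
    finally show "D c t u (m, j) = D c t u ?tl + 1 + hd (c m) j" by (simp add: hd_sym)
  qed
  define T where "T = (\<Sum>u\<in>phc_V m. D c t u ?tl)"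
  have Tdef: "transmission (phc_V (n - 1)) ?E (n - 2, t (n - 1)) = T"
    unfolding transmission_def T_def using nm gm tlV by (auto intro: sum.cong)
  have T2: "(\<Sum>v\<in>phc_V m. D c t ?tl v) = T"
    unfolding T_def using D_sym[OF vmm(1) tlV] by (auto intro: sum.cong)
  define Sm where "Sm = (\<Sum>u\<in>phc_V m. \<Sum>v\<in>phc_V m. D c t u v)"
  have Wm: "wiener (phc_V (n - 1)) ?E = Sm div 2"
    unfolding wiener_def Sm_def using nm gm by (auto intro!: sum.cong arg_cong[where f="\<lambda>x. x div 2"])
  have Sn1: "(\<Sum>u\<in>phc_V n. \<Sum>v\<in>phc_V n. gdist (phc_V n) ?E u v)
      = (\<Sum>u\<in>phc_V n. \<Sum>v\<in>phc_V n. D c t u v)"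
    using gn by (auto intro!: sum.cong)
  have r1: "\<And>u. u \<in> phc_V m \<Longrightarrow> (\<Sum>j::nat<6. D c t u (m, j)) = 6 * D c t u ?tl + 15"
  proof -
    fix u assume u: "u \<in> phc_V m"
    have "(\<Sum>j::nat<6. D c t u (m, j)) = (\<Sum>j<(6::nat). (D c t u ?tl + 1) + hd (c m) j)"
      using KA[OF u] by (auto intro: sum.cong)
    also have "\<dots> = 6 * (D c t u ?tl + 1) + 9" by (simp only: sum.distrib hd_sum1[OF cm(1)]) simp
    finally show "(\<Sum>j::nat<6. D c t u (m, j)) = 6 * D c t u ?tl + 15" by simp
  qed
  have r2: "\<And>i. (\<Sum>v\<in>phc_V m. D c t (m, i) v) = m * 6 * (hd i (c m) + 1) + T"
  proof -
    fix i
    have "(\<Sum>v\<in>phc_V m. D c t (m, i) v) = (\<Sum>v\<in>phc_V m. (hd i (c m) + 1) + D c t ?tl v)"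
      using KB by (auto intro: sum.cong)
    also have "\<dots> = m * 6 * (hd i (c m) + 1) + T" by (simp only: sum.distrib T2) (simp add: card_V)
    finally show "(\<Sum>v\<in>phc_V m. D c t (m, i) v) = m * 6 * (hd i (c m) + 1) + T" .
  qed
  have "(\<Sum>u\<in>phc_V n. \<Sum>v\<in>phc_V n. D c t u v)
      = (\<Sum>u\<in>phc_V m. (\<Sum>v\<in>phc_V m. D c t u v) + (\<Sum>j::nat<6. D c t u (m, j)))
        + (\<Sum>i<6. (\<Sum>v\<in>phc_V m. D c t (m, i) v) + (\<Sum>j::nat<6. D c t (m, i) (m, j)))"
    unfolding nm sumV_Suc ..
  also have "\<dots> = (\<Sum>u\<in>phc_V m. (\<Sum>v\<in>phc_V m. D c t u v) + (6 * D c t u ?tl + 15))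
        + (\<Sum>i<6. (m * 6 * (hd i (c m) + 1) + T) + (\<Sum>j<6. hd i j))"
    using r1 r2 by (auto intro!: sum.cong)
  also have "\<dots> = Sm + 6 * T + 15 * (m * 6) + (m * 6 * (9 + 6) + 6 * T + 54)"
    unfolding Sm_def T_def
    by (simp add: sum.distrib sum_distrib_left[symmetric] card_V hd_sum3 hd_sum2[OF cm(1)]
        sum_distrib_right[symmetric] algebra_simps)
  finally have Sn: "(\<Sum>u\<in>phc_V n. \<Sum>v\<in>phc_V n. D c t u v) = Sm + 2 * (6 * T + 90 * m + 27)"
    by simp
  have P1: "wiener (phc_V n) ?E = wiener (phc_V (n - 1)) ?E
             + 6 * transmission (phc_V (n - 1)) ?E (n - 2, t (n - 1)) + 90 * n - 63"
  proof -
    have d: "(Sm + 2 * (6 * T + 90 * m + 27)) div 2 = Sm div 2 + (6 * T + 90 * m + 27)" by simp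
    have "wiener (phc_V n) ?E = (Sm + 2 * (6 * T + 90 * m + 27)) div 2"
      unfolding wiener_def Sn1 Sn ..
    then show ?thesis unfolding Tdef Wm d using nm by simp
  qed
  have P2: "transmission (phc_V n) ?E (m, x)
           = T + (if gdist (phc_V n) ?E (m, x) (m, c m) = 1 then 12 * m + 9
                else if gdist (phc_V n) ?E (m, x) (m, c m) = 2 then 18 * m + 9
                else 24 * m + 9)" if x: "x < 6" "x \<noteq> c m" for x
  proof -
    have "transmission (phc_V n) ?E (m, x) = (\<Sum>u\<in>phc_V n. D c t u (m, x))"
      unfolding transmission_def using gn HV[OF x(1)] by (auto intro: sum.cong)
    also have "\<dots> = (\<Sum>u\<in>phc_V m. D c t u (m, x)) + (\<Sum>j<6. hd j x)"
      unfolding nm sumV_Suc by simp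
    also have "\<dots> = (\<Sum>u\<in>phc_V m. D c t u ?tl + (1 + hd (c m) x)) + 9"
      using KA x hd_sum2[OF x(1)] by (auto intro: sum.cong)
    also have "\<dots> = T + m * 6 * (1 + hd (c m) x) + 9"
      by (simp only: sum.distrib T_def) (simp add: card_V)
    finally have e: "transmission (phc_V n) ?E (m, x) = T + m * 6 * (1 + hd (c m) x) + 9" .
    have gg: "gdist (phc_V n) ?E (m, x) (m, c m) = hd (c m) x"
      using gn HV x cm by (simp add: hd_sym)
    show ?thesis using hd_cases[OF cm(1) x(1)] x(2) unfolding e gg by auto
  qed
  have P3: "wiener (phc_V 1) ?E = 27"
  proof -
    have "wiener (phc_V 1) ?E = (\<Sum>i<6. \<Sum>j<6. gdist (phc_V 1) ?E (0, i) (0, j)) div 2"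
      unfolding wiener_def One_nat_def sumV1 ..
    also have "\<dots> = (\<Sum>i<6. \<Sum>j<6. hd i j) div 2" using g1 by (auto intro!: sum.cong arg_cong[where f="\<lambda>x. x div 2"])
    finally show ?thesis by (simp add: hd_sum3)
  qed
  have P4: "transmission (phc_V 1) ?E (0, x) = 9" if x: "x < 6" for x
  proof -
    have "transmission (phc_V 1) ?E (0, x) = (\<Sum>i<6. gdist (phc_V 1) ?E (0, i) (0, x))"
      unfolding transmission_def One_nat_def sumV1 ..
    also have "\<dots> = (\<Sum>i<6. hd i x)" using g1 x by (auto intro: sum.cong)
    finally show ?thesis using hd_sum2[OF x] by simp
  qed
  show ?thesis using P1 P2 P3 P4 Tdef nm by simp
qed

end
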